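(* Let $\mathcal{M}\subset\mathbb{R}^n$ be a locally symmetric $C^2$ submanifold and let $\Sigma_{\mathcal{M}}=\{\sigma\in\Sigma^n:\exists\,\bar x\in\mathcal{M},\ \delta>0$ with $\mathcal{M}\cap B(\bar x,\delta)\subseteq\Delta(\sigma)\}$. Then there exists $\sigma_*\in\Sigma^n$ such that $\Sigma_{\mathcal{M}}=\{\sigma\in\Sigma^n:\sigma\sim\sigma_*\}$. Moreover, if $\mathcal{M}\subseteq\Delta(\bar\sigma)^{\perp\perp}$ for some $\bar\sigma\in\Sigma^n$, then $\sigma_*\precsim\bar\sigma$.
   Context: $\Sigma^n$ permutations of $\mathbb{N}_n$ acting by $(\sigma x)_i=x_{\sigma^{-1}(i)}$; $P(\sigma)$ orbit partition; $P(x)$ partition by equal coordinates; $\Delta(\sigma)=\{x:P(x)=P(\sigma)\}$; $\Delta(\sigma)^{\perp\perp}=\{x:x_i=x_j$ whenever $i,j$ lie in the same set of $P(\sigma)\}$. $\sigma\sim\sigma'$ means $P(\sigma)=P(\sigma')$; $\sigma\precsim\sigma'$ means $P(\sigma')$ refines $P(\sigma)$ (every set of $P(\sigma)$ is a union of sets of $P(\sigma')$). $\mathbb{R}^n_\ge=\{x:x_1\ge\cdots\ge x_n\}$; $B$ open ball. A set $S$ is locally symmetric if $S\cap\mathbb{R}^n_\ge\ne\emptyset$ and each $x\in S$ has $\delta>0$ with $\sigma(S\cap B(x,\delta))=S\cap B(x,\delta)$ for all $y\in S\cap B(x,\delta)$, all $\sigma$ with $\sigma y=y$. A locally symmetric $C^2$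 submanifold is a connected $C^2$ submanifold without boundary which is locally symmetric. *)

theory Defs
  imports "HOL-Analysis.Analysis"
begin

text \<open>Vectors in R^n are modelled as real^'n with a finite linearly ordered index
type 'n (isomorphic to {1..n} with its usual order).  Permutations are
bijections p with p permutes UNIV.\<close>

definition perm_act :: "('n::finite \<Rightarrow> 'n) \<Rightarrow> real^'n \<Rightarrow> real^'n" where
  "perm_act p x = (\<chi> i. x $ (inv p i))"

definition same_orbit :: "('n \<Rightarrow> 'n) \<Rightarrow> 'n \<Rightarrow> 'n \<Rightarrow> bool" where
  "same_orbit p i j \<longleftrightarrow> (\<exists>k::nat. (p ^^ k) i = j)"

definition Delta :: "('n::finite \<Rightarrow> 'n) \<Rightarrow> (real^'n) set" where
  "Delta p = {x. \<forall>i j. (x $ i = x $ j) \<longleftrightarrow> same_orbit p i j}"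

definition Delta_pp :: "('n::finite \<Rightarrow> 'n) \<Rightarrow> (real^'n) set" where
  "Delta_pp p = {x. \<forall>i j. same_orbit p i j \<longrightarrow> x $ i = x $ j}"

definition perm_equiv :: "('n \<Rightarrow> 'n) \<Rightarrow> ('n \<Rightarrow> 'n) \<Rightarrow> bool" where
  "perm_equiv p q \<longleftrightarrow> (\<forall>i j. same_orbit p i j \<longleftrightarrow> same_orbit q i j)"

definition perm_below :: "('n \<Rightarrow> 'n) \<Rightarrow> ('n \<Rightarrow> 'n) \<Rightarrow> bool" where
  "perm_below p q \<longleftrightarrow> (\<forall>i j. same_orbit q i j \<longrightarrow> same_orbit p i j)"

definition dec_cone :: "(real^'n::{finite,linorder}) set" where
  "dec_cone = {x. \<forall>i j. i \<le> j \<longrightarrow> x $ j \<le> x $ i}"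

definition locally_symmetric :: "(real^'n::{finite,linorder}) set \<Rightarrow> bool" where
  "locally_symmetric S \<longleftrightarrow> S \<inter> dec_cone \<noteq> {} \<and>
     (\<forall>x\<in>S. \<exists>\<delta>>0. \<forall>y\<in>S \<inter> ball x \<delta>. \<forall>p. p permutes UNIV \<and> perm_act p y = y \<longrightarrow>
        perm_act p ` (S \<inter> ball x \<delta>) = S \<inter> ball x \<delta>)"

definition C2_on :: "(real^'n::finite) set \<Rightarrow> (real^'n \<Rightarrow> real^'n) \<Rightarrow> bool" where
  "C2_on U f \<longleftrightarrow> (\<exists>f' f''.
     (\<forall>x\<in>U. (f has_derivative blinfun_apply (f' x)) (at x)) \<and>
     (\<forall>x\<in>U. (f' has_derivative blinfun_apply (f'' x)) (at x)) \<and>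
     continuous_on U f'')"

definition C2_submanifold :: "(real^'n::finite) set \<Rightarrow> bool" where
  "C2_submanifold M \<longleftrightarrow> (\<forall>x\<in>M. \<exists>U V \<phi> \<psi> L.
     open U \<and> x \<in> U \<and> open V \<and> subspace L \<and>
     C2_on U \<phi> \<and> C2_on V \<psi> \<and> \<phi> ` U = V \<and>
     (\<forall>u\<in>U. \<psi> (\<phi> u) = u) \<and> (\<forall>v\<in>V. \<phi> (\<psi> v) = v) \<and>
     \<phi> ` (M \<inter> U) = V \<inter> L)"

definition locally_symmetric_C2_submanifold :: "(real^'n::{finite,linorder}) set \<Rightarrow> bool" where
  "locally_symmetric_C2_submanifold M \<longleftrightarrow>
     connected M \<and> C2_submanifold M \<and> locally_symmetric M"

definition Sigma_M :: "(real^'n::finite) set \<Rightarrow> ('n \<Rightarrow> 'n) set" where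
  "Sigma_M M = {p. p permutes UNIV \<and> (\<exists>x\<in>M. \<exists>\<delta>>0. M \<inter> ball x \<delta> \<subseteq> Delta p)}"

end

theory Submission
  imports Defs "HOL-Combinatorics.Transposition"
begin


definition nxt :: "('n::{finite,linorder} \<Rightarrow> 'b) \<Rightarrow> 'n \<Rightarrow> 'n" where
  "nxt f i = (if \<exists>k. i < k \<and> f k = f i then Min {k. i < k \<and> f k = f i} else Min {k. f k = f i})"

lemma nxt_f: "f (nxt f i) = f i"
proof (cases "\<exists>k. i < k \<and> f k = f i")
  case True
  then have "Min {k. i < k \<and> f k = f i} \<in> {k. i < k \<and> f k = f i}"
    by (intro Min_in) auto
  then show ?thesis using True by (simp add: nxt_def)
next
  case False
  have *: "Min {k. f k = f i} \<in> {k. f k = f i}" by (intro Min_in) auto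
  have "nxt f i = Min {k. f k = f i}" by (simp only: nxt_def if_not_P[OF False])
  with * show ?thesis by simp
qed

lemma nxt_nonmax: assumes "a < c" "f c = f a"
  shows "a < nxt f a \<and> nxt f a \<le> c"
proof -
  have ex: "\<exists>k. a < k \<and> f k = f a" using assms by blast
  have "Min {k. a < k \<and> f k = f a} \<in> {k. a < k \<and> f k = f a}"
    using ex by (intro Min_in) auto
  moreover have "Min {k. a < k \<and> f k = f a} \<le> c" using assms by (intro Min_le) auto
  ultimately show ?thesis using ex by (simp add: nxt_def)
qed

lemma nxt_max: assumes "\<not> (\<exists>k. a < k \<and> f k = f a)"
  shows "nxt f a = Min {k. f k = f a}"
  by (simp only: nxt_def if_not_P[OF assms])

lemma nxt_neq: assumes "a < b" "f a = f b" shows "nxt f a \<noteq> nxt f b"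
proof -
  have a: "a < nxt f a \<and> nxt f a \<le> b" using nxt_nonmax[of a b f] assms by auto
  show ?thesis
  proof (cases "\<exists>k. b < k \<and> f k = f b")
    case True
    then obtain c where "b < c" "f c = f b" by blast
    then have "b < nxt f b" using nxt_nonmax[of b c f] by auto
    then show ?thesis using a by auto
  next
    case False
    then have "nxt f b = Min {k. f k = f b}" by (rule nxt_max)
    also have "\<dots> \<le> a" using assms by (intro Min_le) auto
    finally show ?thesis using a by auto
  qed
qed

lemma nxt_inj: "inj (nxt f)"
proof (rule injI)
  fix a b assume e: "nxt f a = nxt f b"
  then have "f a = f b" using nxt_f[of f a] nxt_f[of f b] by simp
  then show "a = b" using e nxt_neq[of a b f] nxt_neq[of b a f]
    by (cases a b rule: linorder_cases) auto
qed

lemma nxt_permutes: "nxt f permutes UNIV"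
proof -
  have "inj (nxt f)" by (rule nxt_inj)
  moreover then have "surj (nxt f)" using finite_UNIV_inj_surj[of "nxt f"] by simp
  ultimately have "bij (nxt f)" by (simp add: bij_def)
  then show ?thesis by (auto intro: bij_imp_permutes)
qed

lemma nxt_funpow_f: "f ((nxt f ^^ k) i) = f i"
  by (induction k) (auto simp: nxt_f)

lemma nxt_up: "i \<le> j \<Longrightarrow> f i = f j \<Longrightarrow> \<exists>k. (nxt f ^^ k) i = j"
proof (induction "card {c. c < j}" arbitrary: j rule: less_induct)
  case less
  show ?case
  proof (cases "i = j")
    case True then show ?thesis by (intro exI[of _ 0]) auto
  next
    case False
    then have ij: "i < j" using less.prems by auto
    define S where "S = {c. c < j \<and> f c = f i}"
    have iS: "i \<in> S" using ij by (auto simp: S_def)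
    define j' where "j' = Max S"
    have j'S: "j' \<in> S" unfolding j'_def by (intro Max_in) (use iS in auto)
    have ij': "i \<le> j'" unfolding j'_def using iS by (intro Max_ge) auto
    have j'j: "j' < j" and fj': "f j' = f i" using j'S by (auto simp: S_def)
    have "{c. c < j'} \<subset> {c. c < j}" using j'j by auto
    then have "card {c. c < j'} < card {c. c < j}" by (intro psubset_card_mono) auto
    then obtain k where k: "(nxt f ^^ k) i = j'" using less.hyps[of j'] ij' fj' by auto
    have n1: "j' < nxt f j' \<and> nxt f j' \<le> j" using nxt_nonmax[of j' j f] j'j fj' less.prems by auto
    have "nxt f j' = j"
    proof (rule ccontr)
      assume "nxt f j' \<noteq> j"
      then have "nxt f j' \<in> S" using n1 nxt_f[of f j'] fj' by (auto simp: S_def)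
      then have "nxt f j' \<le> j'" unfolding j'_def by (intro Max_ge) auto
      then show False using n1 by auto
    qed
    then show ?thesis using k by (intro exI[of _ "Suc k"]) auto
  qed
qed

lemma nxt_reach: assumes "f i = f j" shows "\<exists>k. (nxt f ^^ k) i = j"
proof -
  define C where "C = {c. f c = f i}"
  have iC: "i \<in> C" and jC: "j \<in> C" using assms by (auto simp: C_def)
  have fin: "finite C" by simp
  have ne: "C \<noteq> {}" using iC by blast
  have mx: "Max C \<in> C" using fin ne by (rule Max_in)
  have mn: "Min C \<in> C" using fin ne by (rule Min_in)
  have fmx: "f (Max C) = f i" using mx unfolding C_def by simp
  have fmn: "f (Min C) = f j" using mn assms unfolding C_def by simp
  have "i \<le> Max C" using fin iC by (rule Max_ge)
  then obtain k1 where k1: "(nxt f ^^ k1) i = Max C" using nxt_up[of i "Max C" f] fmx by metis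
  have "Min C \<le> j" using fin jC by (rule Min_le)
  then obtain k2 where k2: "(nxt f ^^ k2) (Min C) = j" using nxt_up[of "Min C" j f] fmn by metis
  have nomore: "\<not> (\<exists>k. Max C < k \<and> f k = f (Max C))"
  proof
    assume "\<exists>k. Max C < k \<and> f k = f (Max C)"
    then obtain k where k: "Max C < k" "f k = f (Max C)" by blast
    then have "k \<in> C" using fmx unfolding C_def by simp
    then have "k \<le> Max C" using fin by (intro Max_ge)
    then show False using k(1) by simp
  qed
  have "nxt f (Max C) = Min {k. f k = f (Max C)}" using nomore by (rule nxt_max)
  also have "{k. f k = f (Max C)} = C" using fmx unfolding C_def by simp
  finally have m: "nxt f (Max C) = Min C" .
  have "(nxt f ^^ (k2 + Suc k1)) i = (nxt f ^^ k2) (nxt f ((nxt f ^^ k1) i))"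
    by (simp only: funpow_add comp_apply funpow.simps(2))
  also have "\<dots> = j" using k1 m k2 by simp
  finally show ?thesis by blast
qed

lemma same_orbit_nxt: "same_orbit (nxt f) i j \<longleftrightarrow> f i = f j"
proof
  assume "same_orbit (nxt f) i j"
  then obtain k where "(nxt f ^^ k) i = j" unfolding same_orbit_def by blast
  then show "f i = f j" using nxt_funpow_f[of f k i] by simp
next
  assume "f i = f j"
  then show "same_orbit (nxt f) i j" unfolding same_orbit_def by (rule nxt_reach)
qed



lemma perm_act_nth [simp]: "perm_act p x $ i = x $ inv p i"
  by (simp add: perm_act_def)

lemma perm_act_diff: "perm_act p (x - y) = perm_act p x - perm_act p y"
  by (simp add: vec_eq_iff)

lemma norm_perm_act:
  assumes "p permutes (UNIV::'n::finite set)"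
  shows "norm (perm_act p v) = norm v"
proof -
  have "(\<Sum>i\<in>UNIV. (norm (v $ i))^2) = (\<Sum>i\<in>UNIV. (norm (v $ inv p i))^2)"
    using sum.permute[OF permutes_inv[OF assms], of "\<lambda>i. (norm (v$i))^2"] by (simp add: comp_def)
  then show ?thesis by (simp add: norm_vec_def L2_set_def)
qed

lemma transp_comp: assumes "t $ i = t $ j" shows "t $ Transposition.transpose i j k = t $ k"
  using assms by (cases "k = i"; cases "k = j") auto

lemma inner_transp:
  fixes y t :: "real^'n::finite"
  assumes "t $ i = t $ j"
  shows "inner (perm_act (Transposition.transpose i j) y) t = inner y t"
proof -
  have "inner y t = (\<Sum>k\<in>UNIV. y $ k * t $ k)" by (simp add: inner_vec_def)
  also have "\<dots> = (\<Sum>k\<in>UNIV. y $ Transposition.transpose i j k * t $ Transposition.transpose i j k)"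
    using sum.permute[OF permutes_swap_id[of i UNIV j], of "\<lambda>k. y $ k * t $ k"] by (simp add: comp_def)
  also have "\<dots> = (\<Sum>k\<in>UNIV. y $ Transposition.transpose i j k * t $ k)"
    using transp_comp[OF assms] by simp
  also have "\<dots> = inner (perm_act (Transposition.transpose i j) y) t" by (simp add: inner_vec_def)
  finally show ?thesis by simp
qed

lemma ev_neq: "\<forall>\<^sub>F y in nhds (x::real^'n::finite). \<forall>i j. x$i \<noteq> x$j \<longrightarrow> y$i \<noteq> y$j"
proof (intro eventually_all_finite)
  fix i j
  show "\<forall>\<^sub>F y in nhds x. x$i \<noteq> x$j \<longrightarrow> y$i \<noteq> y$j"
  proof (cases "x$i = x$j")
    case True then show ?thesis by simp
  next
    case False
    have "((\<lambda>y. y$i - y$j) \<longlongrightarrow> x$i - x$j) (nhds x)"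
      by (intro tendsto_intros filterlim_ident)
    then have "\<forall>\<^sub>F y in nhds x. y$i - y$j \<noteq> 0"
      using False by (intro tendsto_imp_eventually_ne) auto
    then show ?thesis by eventually_elim auto
  qed
qed

definition good :: "(real^'n::finite) set \<Rightarrow> real^'n \<Rightarrow> ('n \<Rightarrow> 'n \<Rightarrow> bool) \<Rightarrow> bool" where
  "good M y0 P \<longleftrightarrow> y0 \<in> M \<and> (\<exists>\<rho>>0. \<forall>y\<in>M \<inter> ball y0 \<rho>. \<forall>i j. (y$i = y$j) = P i j)"

lemma good_dense:
  fixes M :: "(real^'n::finite) set"
  assumes "y \<in> M" "\<rho> > 0"
  shows "\<exists>z\<in>ball y \<rho>. good M z (\<lambda>i j. z$i = z$j)"
proof -
  define E where "E z = {(i,j). (z::real^'n)$i = z$j}" for z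
  define N where "N = (LEAST n. \<exists>z\<in>M \<inter> ball y \<rho>. card (E z) = n)"
  have "\<exists>n. \<exists>z\<in>M \<inter> ball y \<rho>. card (E z) = n"
    using assms by (intro exI[of _ "card (E y)"] bexI[of _ y]) auto
  from LeastI_ex[OF this] have "\<exists>z\<in>M \<inter> ball y \<rho>. card (E z) = N" unfolding N_def .
  then obtain z where zM: "z \<in> M" and zb: "z \<in> ball y \<rho>" and cz: "card (E z) = N" by blast
  have "\<forall>\<^sub>F z' in nhds z. z' \<in> ball y \<rho>" using zb by (intro eventually_nhds_in_open) auto
  then have "\<forall>\<^sub>F z' in nhds z. z' \<in> ball y \<rho> \<and> (\<forall>i j. z$i \<noteq> z$j \<longrightarrow> z'$i \<noteq> z'$j)"
    using ev_neq[of z] by eventually_elim auto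
  then obtain d where d: "d > 0" "\<And>z'. dist z' z < d \<Longrightarrow> z' \<in> ball y \<rho> \<and> (\<forall>i j. z$i \<noteq> z$j \<longrightarrow> z'$i \<noteq> z'$j)"
    unfolding eventually_nhds_metric by blast
  have "\<forall>z'\<in>M \<inter> ball z d. \<forall>i j. (z'$i = z'$j) = (z$i = z$j)"
  proof (intro ballI allI)
    fix z' i j assume z': "z' \<in> M \<inter> ball z d"
    then have dz: "dist z' z < d" by (simp add: dist_commute)
    have sub: "E z' \<subseteq> E z" using d(2)[OF dz] by (auto simp: E_def)
    have "N \<le> card (E z')" unfolding N_def using z' d(2)[OF dz] by (intro Least_le) auto
    then have "card (E z) \<le> card (E z')" using cz by simp
    then have "E z' = E z" using sub by (intro card_seteq) auto
    then show "(z'$i = z'$j) = (z$i = z$j)" by (auto simp: E_def set_eq_iff)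
  qed
  then have "good M z (\<lambda>i j. z$i = z$j)" unfolding good_def using zM d(1) by blast
  then show ?thesis using zb by blast
qed

lemma open_ballprop:
  assumes "\<And>A B. A \<subseteq> B \<Longrightarrow> Q B \<Longrightarrow> Q A"
  shows "open {x::'a::metric_space. \<exists>r>0. Q (ball x r)}"
  unfolding open_dist
proof (intro ballI)
  fix x assume "x \<in> {x. \<exists>r>0. Q (ball x r)}"
  then obtain r where r: "r > 0" "Q (ball x r)" by blast
  show "\<exists>e>0. \<forall>y. dist y x < e \<longrightarrow> y \<in> {x. \<exists>r>0. Q (ball x r)}"
  proof (intro exI[of _ r] conjI allI impI)
    fix y assume y: "dist y x < r"
    have "ball y (r - dist y x) \<subseteq> ball x r"
    proof
      fix z assume "z \<in> ball y (r - dist y x)"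
      then have "dist y z < r - dist y x" by simp
      moreover have "dist x z \<le> dist x y + dist y z" by (rule dist_triangle)
      moreover have "dist x y = dist y x" by (rule dist_commute)
      ultimately show "z \<in> ball x r" by simp
    qed
    then have "Q (ball y (r - dist y x))" using assms r(2) by blast
    then show "y \<in> {x. \<exists>r>0. Q (ball x r)}" using y by (intro CollectI exI[of _ "r - dist y x"]) auto
  qed (use r in auto)
qed

lemma KL:
  fixes M :: "(real^'n::{finite,linorder}) set"
  assumes "C2_submanifold M" "locally_symmetric M" "x \<in> M"
  shows "\<exists>r>0. \<exists>R. \<forall>y0 P. y0 \<in> ball x r \<and> good M y0 P \<longrightarrow> P = R"
proof -
  obtain U V \<phi> \<psi> L where ch: "open U" "x \<in> U" "open V" "subspace L" "C2_on U \<phi>" "C2_on V \<psi>"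
      "\<phi> ` U = V" "\<forall>u\<in>U. \<psi> (\<phi> u) = u" "\<forall>v\<in>V. \<phi> (\<psi> v) = v" "\<phi> ` (M \<inter> U) = V \<inter> L"
  proof -
    have "\<exists>U V \<phi> \<psi> L. open U \<and> x \<in> U \<and> open V \<and> subspace L \<and>
       C2_on U \<phi> \<and> C2_on V \<psi> \<and> \<phi> ` U = V \<and>
       (\<forall>u\<in>U. \<psi> (\<phi> u) = u) \<and> (\<forall>v\<in>V. \<phi> (\<psi> v) = v) \<and>
       \<phi> ` (M \<inter> U) = V \<inter> L"
      using assms(1,3) unfolding C2_submanifold_def by (rule bspec)
    then show ?thesis by (elim exE conjE) (rule that; assumption)
  qed
  obtain \<phi>' \<phi>'' where d\<phi>: "\<forall>u\<in>U. (\<phi> has_derivative blinfun_apply (\<phi>' u)) (at u)"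
      and d\<phi>': "\<forall>u\<in>U. (\<phi>' has_derivative blinfun_apply (\<phi>'' u)) (at u)"
    using ch(5) unfolding C2_on_def by blast
  obtain \<psi>' \<psi>'' where d\<psi>: "\<forall>u\<in>V. (\<psi> has_derivative blinfun_apply (\<psi>' u)) (at u)"
      and d\<psi>': "\<forall>u\<in>V. (\<psi>' has_derivative blinfun_apply (\<psi>'' u)) (at u)"
    using ch(6) unfolding C2_on_def by blast
  define a0 where "a0 = \<phi> x"
  have a0V: "a0 \<in> V" using ch(2,7) unfolding a0_def by blast
  have \<psi>a0: "\<psi> a0 = x" using ch(2,8) by (simp add: a0_def)
  define A where "A = \<phi>' x"
  define B where "B = \<psi>' a0"
  have d1: "(\<phi> has_derivative blinfun_apply A) (at x)" using d\<phi> ch(2) by (simp add: A_def)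
  have d2: "(\<psi> has_derivative blinfun_apply B) (at a0)" using d\<psi> a0V by (simp add: B_def)
  have BA: "blinfun_apply B (blinfun_apply A w) = w" for w
  proof -
    have "((\<lambda>u. \<psi> (\<phi> u)) has_derivative (\<lambda>w. blinfun_apply B (blinfun_apply A w))) (at x)"
      using has_derivative_compose[OF d1, of \<psi>] d2 by (simp add: a0_def)
    moreover have "((\<lambda>u. \<psi> (\<phi> u)) has_derivative (\<lambda>w. w)) (at x)"
      by (rule has_derivative_transform_within_open[OF has_derivative_ident ch(1) ch(2)]) (use ch(8) in auto)
    ultimately have "(\<lambda>w. blinfun_apply B (blinfun_apply A w)) = (\<lambda>w. w)" by (rule has_derivative_unique)
    then show ?thesis by (rule fun_cong)
  qed
  have AB: "blinfun_apply A (blinfun_apply B l) = l" for l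
  proof -
    have d3: "(\<phi> has_derivative blinfun_apply A) (at (\<psi> a0))" using d1 \<psi>a0 by simp
    have "((\<lambda>u. \<phi> (\<psi> u)) has_derivative (\<lambda>w. blinfun_apply A (blinfun_apply B w))) (at a0)"
      using has_derivative_compose[OF d2 d3] .
    moreover have "((\<lambda>u. \<phi> (\<psi> u)) has_derivative (\<lambda>w. w)) (at a0)"
      by (rule has_derivative_transform_within_open[OF has_derivative_ident ch(3) a0V]) (use ch(9) in auto)
    ultimately have "(\<lambda>w. blinfun_apply A (blinfun_apply B w)) = (\<lambda>w. w)" by (rule has_derivative_unique)
    then show ?thesis by (rule fun_cong)
  qed
  define T where "T = {w. blinfun_apply A w \<in> L}"
  define R where "R = (\<lambda>i j. x$i = x$j \<and> (\<forall>w\<in>T. w$i = w$j))"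
  obtain \<delta> where \<delta>: "\<delta> > 0" "\<forall>y\<in>M \<inter> ball x \<delta>. \<forall>p. p permutes UNIV \<and> perm_act p y = y \<longrightarrow>
        perm_act p ` (M \<inter> ball x \<delta>) = M \<inter> ball x \<delta>"
    using assms(2,3) unfolding locally_symmetric_def by blast
  define \<epsilon> where "\<epsilon> = 1 / (2 * (norm B + 1))"
  have \<epsilon>pos: "\<epsilon> > 0" unfolding \<epsilon>_def by (simp add: add_nonneg_pos)
  have \<epsilon>B: "norm B * \<epsilon> \<le> 1/2"
  proof -
    have "norm B * \<epsilon> \<le> (norm B + 1) * \<epsilon>" using \<epsilon>pos by (intro mult_right_mono) auto
    also have "(norm B + 1) * \<epsilon> = 1/2"
    proof -
      have "2 + norm B * 2 \<noteq> 0" using norm_ge_zero[of B] by linarith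
      then show ?thesis unfolding \<epsilon>_def by (simp add: field_simps)
    qed
    finally show ?thesis .
  qed
  have c\<phi>: "isCont \<phi> x" using d1 by (rule has_derivative_continuous)
  have c\<phi>': "isCont \<phi>' x" using d\<phi>' ch(2) by (auto intro: has_derivative_continuous)
  have c\<psi>': "isCont \<psi>' (\<phi> x)" using d\<psi>' a0V unfolding a0_def by (auto intro: has_derivative_continuous)
  have t\<phi>: "((\<lambda>y. \<phi> y) \<longlongrightarrow> \<phi> x) (nhds x)" by (rule isCont_tendsto_compose[OF c\<phi> filterlim_ident])
  have t\<phi>': "((\<lambda>y. \<phi>' y) \<longlongrightarrow> \<phi>' x) (nhds x)" by (rule isCont_tendsto_compose[OF c\<phi>' filterlim_ident])
  have t\<psi>': "((\<lambda>y. \<psi>' (\<phi> y)) \<longlongrightarrow> \<psi>' (\<phi> x)) (nhds x)" by (rule isCont_tendsto_compose[OF c\<psi>' t\<phi>])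
  have Ev1: "\<forall>\<^sub>F y in nhds x. y \<in> U \<inter> ball x \<delta>"
    using ch(1,2) \<delta>(1) by (intro eventually_nhds_in_open) auto
  have Ev2: "\<forall>\<^sub>F y in nhds x. norm (\<phi>' y - A) < \<epsilon>"
    using tendstoD[OF t\<phi>' \<epsilon>pos] by (simp add: A_def dist_norm)
  have Ev4: "\<forall>\<^sub>F y in nhds x. \<forall>i j. (\<exists>v\<in>T. v$i \<noteq> v$j) \<longrightarrow>
      (\<exists>v\<in>T. blinfun_apply (\<psi>' (\<phi> y)) (blinfun_apply A v) $ i \<noteq> blinfun_apply (\<psi>' (\<phi> y)) (blinfun_apply A v) $ j)"
  proof (intro eventually_all_finite)
    fix i j
    show "\<forall>\<^sub>F y in nhds x. (\<exists>v\<in>T. v$i \<noteq> v$j) \<longrightarrow>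
      (\<exists>v\<in>T. blinfun_apply (\<psi>' (\<phi> y)) (blinfun_apply A v) $ i \<noteq> blinfun_apply (\<psi>' (\<phi> y)) (blinfun_apply A v) $ j)"
    proof (cases "\<exists>v\<in>T. v$i \<noteq> v$j")
      case False then show ?thesis by simp
    next
      case True
      then obtain v where vT: "v \<in> T" and vij: "v$i \<noteq> v$j" by blast
      have "((\<lambda>y. blinfun_apply (\<psi>' (\<phi> y)) (blinfun_apply A v) $ i - blinfun_apply (\<psi>' (\<phi> y)) (blinfun_apply A v) $ j)
         \<longlongrightarrow> blinfun_apply (\<psi>' (\<phi> x)) (blinfun_apply A v) $ i - blinfun_apply (\<psi>' (\<phi> x)) (blinfun_apply A v) $ j) (nhds x)"
        by (intro tendsto_intros blinfun.tendsto[OF t\<psi>'])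
      moreover have "blinfun_apply (\<psi>' (\<phi> x)) (blinfun_apply A v) = v"
        using BA by (simp add: B_def a0_def)
      ultimately have "\<forall>\<^sub>F y in nhds x. blinfun_apply (\<psi>' (\<phi> y)) (blinfun_apply A v) $ i - blinfun_apply (\<psi>' (\<phi> y)) (blinfun_apply A v) $ j \<noteq> 0"
        using vij by (intro tendsto_imp_eventually_ne) auto
      then show ?thesis by eventually_elim (use vT in auto)
    qed
  qed
  define Pr where "Pr y \<longleftrightarrow> (y \<in> U \<inter> ball x \<delta>) \<and> norm (\<phi>' y - A) < \<epsilon> \<and> (\<forall>i j. x$i \<noteq> x$j \<longrightarrow> y$i \<noteq> y$j) \<and>
     (\<forall>i j. (\<exists>v\<in>T. v$i \<noteq> v$j) \<longrightarrow>
      (\<exists>v\<in>T. blinfun_apply (\<psi>' (\<phi> y)) (blinfun_apply A v) $ i \<noteq> blinfun_apply (\<psi>' (\<phi> y)) (blinfun_apply A v) $ j))" for y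
  have "\<forall>\<^sub>F y in nhds x. Pr y"
    using Ev1 Ev2 ev_neq[of x] Ev4 unfolding Pr_def by eventually_elim blast
  then obtain r where r: "r > 0" "\<And>y. dist y x < r \<Longrightarrow> Pr y"
    unfolding eventually_nhds_metric by blast
  have symm: "y $ i = y $ j" if y: "y \<in> M" "dist y x < r" and Rij: "R i j" for y i j
  proof -
    define \<tau> where "\<tau> = Transposition.transpose i j"
    have xij: "x$i = x$j" and Tij: "\<forall>w\<in>T. w$i = w$j" using Rij by (auto simp: R_def)
    have \<tau>p: "\<tau> permutes UNIV" by (simp add: \<tau>_def permutes_swap_id)
    have \<tau>x: "perm_act \<tau> x = x" by (simp add: vec_eq_iff \<tau>_def transp_comp[OF xij])
    have xin: "x \<in> M \<inter> ball x \<delta>" using assms(3) \<delta>(1) by simp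
    have img: "perm_act \<tau> ` (M \<inter> ball x \<delta>) = M \<inter> ball x \<delta>" using \<delta>(2) xin \<tau>p \<tau>x by blast
    have Py: "Pr y" using r(2) y(2) .
    have yMb: "y \<in> M \<inter> ball x \<delta>" using Py y(1) by (simp add: Pr_def)
    define y' where "y' = perm_act \<tau> y"
    have "y' \<in> perm_act \<tau> ` (M \<inter> ball x \<delta>)" unfolding y'_def using yMb by (rule imageI)
    then have y'M: "y' \<in> M" using img by auto
    have "dist y' x = norm (perm_act \<tau> (y - x))"
      by (simp add: dist_norm y'_def perm_act_diff \<tau>x)
    also have "\<dots> = dist y x" by (simp add: norm_perm_act[OF \<tau>p] dist_norm)
    finally have dy': "dist y' x < r" using y(2) by simp
    have Py': "Pr y'" using r(2) dy' .
    have yU: "y \<in> U" and y'U: "y' \<in> U" using Py Py' by (auto simp: Pr_def)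
    have yb: "y \<in> ball x r" and y'b: "y' \<in> ball x r" using y(2) dy' by (auto simp: dist_commute)
    have mvt0: "norm (\<phi> y' - \<phi> y - blinfun_apply (\<phi>' x) (y' - y)) \<le> norm (y' - y) * \<epsilon>"
    proof (rule differentiable_bound_linearization[where S="ball x r" and f=\<phi> and f'="\<lambda>u. blinfun_apply (\<phi>' u)"])
      fix t :: real assume "t \<in> {0..1}"
      then have "(1 - t) *\<^sub>R y + t *\<^sub>R y' \<in> ball x r"
        using convex_ball[of x r] yb y'b unfolding convex_alt by auto
      moreover have "(1 - t) *\<^sub>R y + t *\<^sub>R y' = y + t *\<^sub>R (y' - y)" by (simp add: algebra_simps)
      ultimately show "y + t *\<^sub>R (y' - y) \<in> ball x r" by simp
    next
      fix u assume "u \<in> ball x r"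
      then have "Pr u" using r(2) by (simp add: dist_commute)
      then have "u \<in> U" by (simp add: Pr_def)
      then show "(\<phi> has_derivative blinfun_apply (\<phi>' u)) (at u within ball x r)"
        using d\<phi> by (auto intro: has_derivative_at_withinI)
    next
      fix u assume "u \<in> ball x r"
      then have "Pr u" using r(2) by (simp add: dist_commute)
      then have "norm (\<phi>' u - A) < \<epsilon>" by (simp add: Pr_def)
      moreover have "blinfun_apply (\<phi>' u) - blinfun_apply A = blinfun_apply (\<phi>' u - A)"
        by (simp add: fun_eq_iff blinfun.diff_left)
      ultimately show "onorm (blinfun_apply (\<phi>' u) - blinfun_apply (\<phi>' x)) \<le> \<epsilon>"
        by (simp add: norm_blinfun.rep_eq A_def)
    next
      show "x \<in> ball x r" using r(1) by simp
    qed
    have mvt: "norm (\<phi> y' - \<phi> y - blinfun_apply A (y' - y)) \<le> norm (y' - y) * \<epsilon>"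
      using mvt0 by (simp add: A_def)
    define w where "w = y' - y"
    define l where "l = \<phi> y' - \<phi> y"
    have "\<phi> y \<in> V \<inter> L" "\<phi> y' \<in> V \<inter> L" using ch(10) y(1) y'M yU y'U by blast+
    then have lL: "l \<in> L" unfolding l_def using ch(4) by (auto intro: real_vector.subspace_diff)
    define e where "e = l - blinfun_apply A w"
    have ne: "norm e \<le> norm w * \<epsilon>" using mvt by (simp add: e_def l_def w_def)
    have BlT: "blinfun_apply B l \<in> T" using AB lL by (simp add: T_def)
    then have Blij: "blinfun_apply B l $ i = blinfun_apply B l $ j" using Tij by blast
    have orth: "inner w (blinfun_apply B l) = 0"
      unfolding w_def y'_def \<tau>_def using inner_transp[OF Blij, of y] by (simp add: inner_diff_left)
    have wdec: "w = blinfun_apply B l - blinfun_apply B e"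
      by (simp add: e_def blinfun.diff_right BA)
    have "(norm w)^2 = inner w w" by (rule power2_norm_eq_inner)
    also have "inner w w = inner w (blinfun_apply B l - blinfun_apply B e)"
      using arg_cong[OF wdec, of "inner w"] .
    also have "\<dots> = - inner w (blinfun_apply B e)" using orth by (simp add: inner_diff_right)
    also have "\<dots> = inner w (- blinfun_apply B e)" by simp
    also have "\<dots> \<le> norm w * norm (- blinfun_apply B e)" by (rule norm_cauchy_schwarz)
    also have "\<dots> = norm w * norm (blinfun_apply B e)" by simp
    also have "\<dots> \<le> norm w * (norm B * norm e)" by (intro mult_left_mono norm_blinfun) simp
    also have "\<dots> \<le> norm w * (norm B * (norm w * \<epsilon>))" by (intro mult_left_mono ne) simp_all
    also have "\<dots> = (norm w)^2 * (norm B * \<epsilon>)" by (simp add: power2_eq_square algebra_simps)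
    also have "\<dots> \<le> (norm w)^2 * (1/2)" by (intro mult_left_mono \<epsilon>B) simp
    finally have "(norm w)^2 \<le> 0" by simp
    then have "w = 0" by simp
    then have "y' = y" by (simp add: w_def)
    then have "y' $ i = y $ i" by simp
    then show ?thesis by (simp add: y'_def \<tau>_def)
  qed
  show ?thesis
  proof (intro exI[of _ r] conjI r(1) exI[of _ R] allI impI)
    fix y0 P assume a: "y0 \<in> ball x r \<and> good M y0 P"
    then have dy0: "dist y0 x < r" by (simp add: dist_commute)
    have y0M: "y0 \<in> M" using a by (simp add: good_def)
    obtain \<rho> where \<rho>: "\<rho> > 0" "\<forall>y\<in>M \<inter> ball y0 \<rho>. \<forall>i j. (y$i = y$j) = P i j"
      using a unfolding good_def by blast
    have Peq: "P i j = (y0$i = y0$j)" for i j using \<rho> y0M by auto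
    have Py0: "Pr y0" using r(2) dy0 .
    show "P = R"
    proof (intro ext iffI)
      fix i j assume "R i j"
      then show "P i j" using symm[OF y0M dy0] Peq by simp
    next
      fix i j assume Pij: "P i j"
      then have y0ij: "y0$i = y0$j" using Peq by simp
      then have xij: "x$i = x$j" using Py0 by (auto simp: Pr_def)
      have "\<forall>w\<in>T. w$i = w$j"
      proof (rule ccontr)
        assume "\<not> (\<forall>w\<in>T. w$i = w$j)"
        then have "\<exists>v\<in>T. v$i \<noteq> v$j" by blast
        then obtain v where vT: "v \<in> T" and
          cne: "blinfun_apply (\<psi>' (\<phi> y0)) (blinfun_apply A v) $ i \<noteq> blinfun_apply (\<psi>' (\<phi> y0)) (blinfun_apply A v) $ j"
          using Py0 unfolding Pr_def by blast
        have y0U: "y0 \<in> U" using Py0 by (simp add: Pr_def)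
        define a where "a = \<phi> y0"
        have aVL: "a \<in> V \<inter> L" using ch(10) y0M y0U unfolding a_def by blast
        have \<psi>a: "\<psi> a = y0" using ch(8) y0U by (simp add: a_def)
        define wv where "wv = blinfun_apply A v"
        have wvL: "wv \<in> L" using vT by (simp add: T_def wv_def)
        define c where "c = blinfun_apply (\<psi>' a) wv $ i - blinfun_apply (\<psi>' a) wv $ j"
        have c0: "c \<noteq> 0" using cne by (simp add: c_def a_def wv_def)
        define h where "h = (\<lambda>t::real. \<psi> (a + t *\<^sub>R wv) $ i - \<psi> (a + t *\<^sub>R wv) $ j)"
        have deriv: "(h has_field_derivative c) (at 0)"
        proof -
          have dl: "((\<lambda>t::real. a + t *\<^sub>R wv) has_derivative (\<lambda>t. t *\<^sub>R wv)) (at 0)"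
            by (auto intro!: derivative_eq_intros)
          have d\<psi>a: "(\<psi> has_derivative blinfun_apply (\<psi>' a)) (at (a + 0 *\<^sub>R wv))"
            using d\<psi> aVL by simp
          have dc: "((\<lambda>t. \<psi> (a + t *\<^sub>R wv)) has_derivative (\<lambda>t. blinfun_apply (\<psi>' a) (t *\<^sub>R wv))) (at 0)"
            using has_derivative_compose[OF dl d\<psi>a] .
          have di: "((\<lambda>t. \<psi> (a + t *\<^sub>R wv) $ i) has_derivative (\<lambda>t. blinfun_apply (\<psi>' a) (t *\<^sub>R wv) $ i)) (at 0)"
            by (rule bounded_linear.has_derivative[OF bounded_linear_vec_nth dc])
          have dj: "((\<lambda>t. \<psi> (a + t *\<^sub>R wv) $ j) has_derivative (\<lambda>t. blinfun_apply (\<psi>' a) (t *\<^sub>R wv) $ j)) (at 0)"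
            by (rule bounded_linear.has_derivative[OF bounded_linear_vec_nth dc])
          have "(h has_derivative (\<lambda>t. blinfun_apply (\<psi>' a) (t *\<^sub>R wv) $ i - blinfun_apply (\<psi>' a) (t *\<^sub>R wv) $ j)) (at 0)"
            unfolding h_def by (rule has_derivative_diff[OF di dj])
          moreover have "(\<lambda>t. blinfun_apply (\<psi>' a) (t *\<^sub>R wv) $ i - blinfun_apply (\<psi>' a) (t *\<^sub>R wv) $ j) = (*) c"
            by (simp add: fun_eq_iff blinfun.scaleR_right c_def algebra_simps)
          ultimately show ?thesis by (simp add: has_field_derivative_def)
        qed
        obtain e where e: "e > 0" "ball a e \<subseteq> V" using ch(3) aVL open_contains_ball by blast
        have c\<psi>: "continuous (at a) \<psi>" using d\<psi> aVL by (auto intro: has_derivative_continuous)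
        obtain d1 where d1: "d1 > 0" "\<And>s. dist s a < d1 \<Longrightarrow> dist (\<psi> s) (\<psi> a) < \<rho>"
          using c\<psi> \<rho>(1) unfolding continuous_at_eps_delta by blast
        define d where "d = min e d1 / (norm wv + 1)"
        have dpos: "d > 0" unfolding d_def using e(1) d1(1) by (simp add: add_nonneg_pos)
        have loc: "\<forall>t. \<bar>0 - t\<bar> < d \<longrightarrow> h 0 = h t"
        proof (intro allI impI)
          fix t :: real assume "\<bar>0 - t\<bar> < d"
          then have tlt: "\<bar>t\<bar> < d" by simp
          have "norm (t *\<^sub>R wv) = \<bar>t\<bar> * norm wv" by simp
          also have "\<dots> \<le> \<bar>t\<bar> * (norm wv + 1)" by (intro mult_left_mono) auto
          also have "\<dots> < d * (norm wv + 1)" using tlt by (intro mult_strict_right_mono) (auto simp: add_nonneg_pos)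
          also have "\<dots> = min e d1"
          proof -
            have "1 + norm wv \<noteq> 0" "norm wv + 1 \<noteq> 0" using norm_ge_zero[of wv] by linarith+
            then show ?thesis unfolding d_def by (simp add: field_simps)
          qed
          finally have nt: "norm (t *\<^sub>R wv) < min e d1" .
          have "a + t *\<^sub>R wv \<in> ball a e" using nt by (simp add: dist_norm)
          then have inV: "a + t *\<^sub>R wv \<in> V" using e(2) by blast
          have inL: "a + t *\<^sub>R wv \<in> L" using aVL wvL ch(4)
            by (auto intro: real_vector.subspace_add real_vector.subspace_scale)
          have "a + t *\<^sub>R wv \<in> \<phi> ` (M \<inter> U)" using inV inL ch(10) by blast
          then obtain m where m: "m \<in> M" "m \<in> U" "\<phi> m = a + t *\<^sub>R wv"
            by (elim imageE IntE) (metis)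
          have \<psi>m: "\<psi> (a + t *\<^sub>R wv) = m" using ch(8) m by metis
          have "dist (a + t *\<^sub>R wv) a < d1" using nt by (simp add: dist_norm)
          then have "dist m y0 < \<rho>" using d1(2) \<psi>m \<psi>a by metis
          then have "m \<in> M \<inter> ball y0 \<rho>" using m(1) by (simp add: dist_commute)
          then have "(m$i = m$j) = P i j" using \<rho>(2) by blast
          then have "m$i = m$j" using Pij by simp
          then have "h t = 0" unfolding h_def using \<psi>m by simp
          moreover have "h 0 = 0" unfolding h_def using \<psi>a y0ij by simp
          ultimately show "h 0 = h t" by simp
        qed
        have "c = 0" by (rule DERIV_local_const[OF deriv dpos loc])
        then show False using c0 by simp
      qed
      then show "R i j" using xij by (simp add: R_def)
    qed
  qed
qed

theorem lemma3p23:
  fixes M :: "(real^'n::{finite,linorder}) set"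
  assumes "locally_symmetric_C2_submanifold M"
  shows "\<exists>s. s permutes (UNIV::'n set) \<and>
           Sigma_M M = {p. p permutes UNIV \<and> perm_equiv p s} \<and>
           (\<forall>sb. sb permutes UNIV \<and> M \<subseteq> Delta_pp sb \<longrightarrow> perm_below s sb)"
proof -
  have conn: "connected M" and sub: "C2_submanifold M" and ls: "locally_symmetric M"
    using assms by (auto simp: locally_symmetric_C2_submanifold_def)
  have "M \<noteq> {}" using ls by (auto simp: locally_symmetric_def)
  then obtain x0 where "x0 \<in> M" by blast
  then obtain z0 where g0: "good M z0 (\<lambda>i j. z0$i = z0$j)"
    using good_dense[of x0 M 1] by auto
  define P0 where "P0 = (\<lambda>i j. z0$i = z0$j)"
  have g0': "good M z0 P0" using g0 by (simp add: P0_def)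
  have z0M: "z0 \<in> M" using g0 by (simp add: good_def)
  define OA where "OA = {x. \<exists>r>0. (\<lambda>S. \<forall>y P. y \<in> S \<and> good M y P \<longrightarrow> P = P0) (ball x r)}"
  define OB where "OB = {x. \<exists>r>0. (\<lambda>S. \<exists>R. R \<noteq> P0 \<and> (\<forall>y P. y \<in> S \<and> good M y P \<longrightarrow> P = R)) (ball x r)}"
  have oA: "open OA" unfolding OA_def by (rule open_ballprop) blast
  have oB: "open OB" unfolding OB_def by (rule open_ballprop) blast
  have cov: "M \<subseteq> OA \<union> OB"
  proof
    fix x assume "x \<in> M"
    then obtain r R where r: "r > 0" "\<forall>y0 P. y0 \<in> ball x r \<and> good M y0 P \<longrightarrow> P = R"
      using KL[OF sub ls] by blast
    show "x \<in> OA \<union> OB"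
    proof (cases "R = P0")
      case True then show ?thesis using r unfolding OA_def by auto
    next
      case False then show ?thesis using r unfolding OB_def by auto
    qed
  qed
  have disj: "OA \<inter> OB \<inter> M = {}"
  proof (rule ccontr)
    assume "OA \<inter> OB \<inter> M \<noteq> {}"
    then obtain x where x: "x \<in> OA" "x \<in> OB" "x \<in> M" by blast
    obtain r1 where r1: "r1 > 0" "\<forall>y P. y \<in> ball x r1 \<and> good M y P \<longrightarrow> P = P0"
      using x(1) unfolding OA_def by blast
    obtain r2 R where r2: "r2 > 0" "R \<noteq> P0" "\<forall>y P. y \<in> ball x r2 \<and> good M y P \<longrightarrow> P = R"
      using x(2) unfolding OB_def by blast
    obtain z where z: "z \<in> ball x (min r1 r2)" "good M z (\<lambda>i j. z$i = z$j)"
      using good_dense[OF x(3), of "min r1 r2"] r1(1) r2(1) by auto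
    have "(\<lambda>i j. z$i = z$j) = P0" using r1(2) z by auto
    moreover have "(\<lambda>i j. z$i = z$j) = R" using r2(3) z by auto
    ultimately show False using r2(2) by simp
  qed
  have "z0 \<in> OA"
  proof -
    obtain r R where r: "r > 0" "\<forall>y0 P. y0 \<in> ball z0 r \<and> good M y0 P \<longrightarrow> P = R"
      using KL[OF sub ls z0M] by blast
    have "z0 \<in> ball z0 r" using r(1) by simp
    then have "P0 = R" using r(2) g0' by blast
    then show ?thesis using r unfolding OA_def by auto
  qed
  then have "OB \<inter> M = {}" using connectedD[OF conn oA oB] disj cov z0M by auto
  then have MA: "M \<subseteq> OA" using cov by auto
  have allgood: "P = P0" if "good M y P" for y P
  proof -
    have "y \<in> M" using that by (simp add: good_def)
    then obtain r where r: "r > 0" "\<forall>y' P. y' \<in> ball y r \<and> good M y' P \<longrightarrow> P = P0"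
      using MA unfolding OA_def by blast
    have "y \<in> ball y r" using r(1) by simp
    then show ?thesis using that r(2) by blast
  qed
  define s where "s = nxt (\<lambda>i. z0 $ i)"
  have sP: "same_orbit s i j = P0 i j" for i j
    unfolding s_def P0_def by (rule same_orbit_nxt)
  obtain \<rho> where \<rho>: "\<rho> > 0" "\<forall>y\<in>M \<inter> ball z0 \<rho>. \<forall>i j. (y$i = y$j) = P0 i j"
    using g0' unfolding good_def by blast
  have "Sigma_M M = {p. p permutes UNIV \<and> perm_equiv p s}"
  proof (intro set_eqI iffI)
    fix p assume "p \<in> Sigma_M M"
    then obtain x \<delta> where p: "p permutes UNIV" "x \<in> M" "\<delta> > 0" "M \<inter> ball x \<delta> \<subseteq> Delta p"
      unfolding Sigma_M_def by blast
    have "good M x (same_orbit p)"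
      unfolding good_def using p by (auto simp: Delta_def)
    then have "same_orbit p = P0" by (rule allgood)
    then show "p \<in> {p. p permutes UNIV \<and> perm_equiv p s}"
      using p(1) sP by (auto simp: perm_equiv_def)
  next
    fix p assume "p \<in> {p. p permutes UNIV \<and> perm_equiv p s}"
    then have p: "p permutes UNIV" "perm_equiv p s" by auto
    have "M \<inter> ball z0 \<rho> \<subseteq> Delta p"
      using \<rho>(2) p(2) sP by (auto simp: Delta_def perm_equiv_def)
    then show "p \<in> Sigma_M M" unfolding Sigma_M_def using p(1) z0M \<rho>(1) by blast
  qed
  moreover have "\<forall>sb. sb permutes UNIV \<and> M \<subseteq> Delta_pp sb \<longrightarrow> perm_below s sb"
  proof (intro allI impI)
    fix sb assume "sb permutes UNIV \<and> M \<subseteq> Delta_pp sb"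
    then have "z0 \<in> Delta_pp sb" using z0M by auto
    then show "perm_below s sb" using sP unfolding perm_below_def Delta_pp_def P0_def by auto
  qed
  moreover have "s permutes UNIV" unfolding s_def by (rule nxt_permutes)
  ultimately show ?thesis by blast
qed

end
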